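(* Let $\nu\ge3$ be a square-free integer with $\nu\equiv2$ or $3\pmod 4$. Define $x_0=0$, $x_{n+1}=\sqrt{\nu+x_n}$, let $P_n$ be the minimal polynomial of $x_n$ and $C_n$ its constant term. Let $p$ be a rational prime dividing $C_n$ for some $n\ge1$, and let $n(p)$ be the least positive such $n$. Then the ideal $(p,x_{n(p)})$ of $\mathbb{Z}[x_{n(p)}]$ is proper.
   Context: Square roots are the positive real ones. *)

theory Defs
  imports Complex_Main "HOL-Computational_Algebra.Computational_Algebra"
begin

primrec xseq :: "int \<Rightarrow> nat \<Rightarrow> real" where
  "xseq \<nu> 0 = 0"
| "xseq \<nu> (Suc n) = sqrt (of_int \<nu> + xseq \<nu> n)"

definition is_min_poly :: "real \<Rightarrow> rat poly \<Rightarrow> bool" where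
  "is_min_poly x q \<longleftrightarrow> lead_coeff q = 1 \<and> poly (map_poly of_rat q) x = 0 \<and>
     (\<forall>r. r \<noteq> 0 \<and> poly (map_poly of_rat r) x = 0 \<longrightarrow> degree q \<le> degree r)"

definition min_poly :: "real \<Rightarrow> rat poly" where
  "min_poly x = (THE q. is_min_poly x q)"

definition Cterm :: "int \<Rightarrow> nat \<Rightarrow> rat" where
  "Cterm \<nu> n = coeff (min_poly (xseq \<nu> n)) 0"

definition int_dvd_rat :: "int \<Rightarrow> rat \<Rightarrow> bool" where
  "int_dvd_rat p c \<longleftrightarrow> (\<exists>k::int. c = of_int (p * k))"

definition Zadj :: "real \<Rightarrow> real set" where
  "Zadj x = {poly (map_poly of_int f) x | f :: int poly. True}"

definition ideal_px :: "int \<Rightarrow> real \<Rightarrow> real set" where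
  "ideal_px p x = {of_int p * a + x * b | a b. a \<in> Zadj x \<and> b \<in> Zadj x}"

end

theory Submission
  imports Defs
begin

lemma map_poly_of_int_add:
  "map_poly (of_int :: int \<Rightarrow> 'a::comm_ring_1) (p + q) = map_poly of_int p + map_poly of_int q"
  by (intro poly_eqI) (simp add: coeff_map_poly)

lemma map_poly_of_int_diff:
  "map_poly (of_int :: int \<Rightarrow> 'a::comm_ring_1) (p - q) = map_poly of_int p - map_poly of_int q"
  by (intro poly_eqI) (simp add: coeff_map_poly)

lemma map_poly_of_int_mult:
  "map_poly (of_int :: int \<Rightarrow> 'a::comm_ring_1) (p * q) = map_poly of_int p * map_poly of_int q"
  by (intro poly_eqI) (simp add: coeff_map_poly coeff_mult)

lemma map_poly_of_rat_add:
  "map_poly (of_rat :: rat \<Rightarrow> real) (p + q) = map_poly of_rat p + map_poly of_rat q"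
  by (intro poly_eqI) (simp add: coeff_map_poly of_rat_add)

lemma map_poly_of_rat_diff:
  "map_poly (of_rat :: rat \<Rightarrow> real) (p - q) = map_poly of_rat p - map_poly of_rat q"
  by (intro poly_eqI) (simp add: coeff_map_poly of_rat_diff)

lemma map_poly_of_rat_mult:
  "map_poly (of_rat :: rat \<Rightarrow> real) (p * q) = map_poly of_rat p * map_poly of_rat q"
  by (intro poly_eqI) (simp add: coeff_map_poly coeff_mult of_rat_mult of_rat_sum)

lemma map_poly_of_rat_of_int:
  "map_poly (of_rat :: rat \<Rightarrow> real) (map_poly of_int p) = map_poly of_int p"
  by (intro poly_eqI) (simp add: coeff_map_poly)

lemma map_poly_of_int_inj:
  "map_poly (of_int :: int \<Rightarrow> 'a::{comm_ring_1,ring_char_0}) p = map_poly of_int q \<Longrightarrow> p = q"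
  by (metis (no_types, lifting) coeff_map_poly of_int_0 of_int_eq_iff poly_eqI)

lemma xseq_nonneg: "\<nu> \<ge> 0 \<Longrightarrow> xseq \<nu> n \<ge> 0"
  by (induction n) auto

fun Rp :: "int \<Rightarrow> nat \<Rightarrow> real poly" where
  "Rp \<nu> 0 = [:0, 1:]"
| "Rp \<nu> (Suc n) = pcompose (Rp \<nu> n) [:- of_int \<nu>, 0, 1:]"

lemma Rp_props:
  assumes "\<nu> \<ge> 0"
  shows "lead_coeff (Rp \<nu> n) = 1 \<and> (\<forall>i. coeff (Rp \<nu> n) i \<in> \<int>) \<and> poly (Rp \<nu> n) (xseq \<nu> n) = 0"
proof (induction n)
  case 0
  then show ?case by (auto simp: coeff_pCons split: nat.splits)
next
  case (Suc n)
  have sq: "(xseq \<nu> (Suc n))^2 = of_int \<nu> + xseq \<nu> n"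
    using xseq_nonneg[OF assms, of n] assms by simp
  have "lead_coeff (Rp \<nu> (Suc n)) = 1"
    using Suc by (simp add: lead_coeff_comp)
  moreover have "\<forall>i. coeff (Rp \<nu> (Suc n)) i \<in> \<int>"
    using Suc by (auto intro!: coeff_pcompose_semiring_closed simp: coeff_pCons split: nat.splits)
  moreover have "poly (Rp \<nu> (Suc n)) (xseq \<nu> (Suc n)) = 0"
    using Suc sq by (simp add: poly_pcompose power2_eq_square)
  ultimately show ?case by blast
qed

lemma xseq_algebraic_int:
  assumes "\<nu> \<ge> 0"
  obtains Q :: "int poly" where "lead_coeff Q = 1" "poly (map_poly of_int Q) (xseq \<nu> n) = 0"
proof -
  have "algebraic_int (xseq \<nu> n)"
    using Rp_props[OF assms, of n] by (intro algebraic_int.intros[of "Rp \<nu> n"]) auto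
  then show ?thesis using that by (auto simp: algebraic_int_altdef_ipoly)
qed

lemma min_poly_unique:
  assumes "is_min_poly x q1" "is_min_poly x q2"
  shows "q1 = q2"
proof (rule ccontr)
  assume ne: "q1 \<noteq> q2"
  define r where "r = q1 - q2"
  have q1nz: "q1 \<noteq> 0" using assms(1) by (auto simp: is_min_poly_def)
  have q2nz: "q2 \<noteq> 0" using assms(2) by (auto simp: is_min_poly_def)
  have "r \<noteq> 0" using ne by (simp add: r_def)
  moreover have "poly (map_poly of_rat r) x = 0"
    using assms by (simp add: r_def map_poly_of_rat_diff is_min_poly_def)
  ultimately have le1: "degree q1 \<le> degree r" and le2: "degree q2 \<le> degree q1"
    using assms q1nz by (auto simp: is_min_poly_def)
  have le3: "degree q1 \<le> degree q2" using assms q2nz by (auto simp: is_min_poly_def)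
  have "degree r \<le> degree q1" using le2 by (simp add: r_def degree_diff_le)
  hence dr: "degree r = degree q1" using le1 by simp
  have "coeff r (degree q1) = 0"
    using assms le2 le3 by (simp add: r_def is_min_poly_def)
  hence "lead_coeff r = 0" using dr by simp
  with \<open>r \<noteq> 0\<close> show False by simp
qed

lemma min_poly_exists:
  assumes "\<nu> \<ge> 0"
  shows "\<exists>q. is_min_poly (xseq \<nu> n) q"
proof -
  let ?x = "xseq \<nu> n"
  obtain Q :: "int poly" where Q: "lead_coeff Q = 1" "poly (map_poly of_int Q) ?x = 0"
    using xseq_algebraic_int[OF assms] by blast
  let ?S = "\<lambda>r::rat poly. r \<noteq> 0 \<and> poly (map_poly of_rat r) ?x = 0"
  have "?S (map_poly of_int Q)"
    using Q by (auto simp: map_poly_of_rat_of_int map_poly_eq_0_iff)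
  from ex_has_least_nat[of ?S, OF this, of degree] obtain r0 where
    r0: "?S r0" "\<And>y. ?S y \<Longrightarrow> degree r0 \<le> degree y" by blast
  define q where "q = smult (1 / lead_coeff r0) r0"
  have "lead_coeff q = 1" using r0 by (simp add: q_def)
  moreover have "poly (map_poly of_rat q) ?x = 0"
    using r0 by (simp add: q_def map_poly_smult of_rat_mult)
  moreover have "degree q = degree r0" using r0 by (simp add: q_def)
  ultimately have "is_min_poly ?x q" using r0 by (auto simp: is_min_poly_def)
  thus ?thesis by blast
qed

lemma min_poly_is:
  assumes "\<nu> \<ge> 0"
  shows "is_min_poly (xseq \<nu> n) (min_poly (xseq \<nu> n))"
  unfolding min_poly_def
  using min_poly_exists[OF assms, of n] min_poly_unique by (metis theI)

lemma min_poly_dvd: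
  assumes "is_min_poly x P" "poly (map_poly of_rat g) x = 0"
  shows "P dvd g"
proof -
  have Pnz: "P \<noteq> 0" using assms(1) by (auto simp: is_min_poly_def)
  have eq: "g = P * (g div P) + g mod P" by simp
  have "poly (map_poly of_rat (P * (g div P) + g mod P)) x = poly (map_poly of_rat P) x * poly (map_poly of_rat (g div P)) x
        + poly (map_poly of_rat (g mod P)) x"
    by (simp only: map_poly_of_rat_add map_poly_of_rat_mult poly_add poly_mult)
  hence "poly (map_poly of_rat g) x = poly (map_poly of_rat P) x * poly (map_poly of_rat (g div P)) x
        + poly (map_poly of_rat (g mod P)) x" using eq by metis
  hence root: "poly (map_poly of_rat (g mod P)) x = 0"
    using assms by (simp add: is_min_poly_def)
  have "g mod P = 0"
  proof (rule ccontr)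
    assume "g mod P \<noteq> 0"
    hence "degree (g mod P) < degree P" using Pnz degree_mod_less' by blast
    moreover have "degree P \<le> degree (g mod P)"
      using assms(1) root \<open>g mod P \<noteq> 0\<close> by (auto simp: is_min_poly_def)
    ultimately show False by simp
  qed
  thus ?thesis by (simp add: mod_eq_0_iff_dvd)
qed

lemma map_poly_of_int_smult:
  "map_poly (of_int :: int \<Rightarrow> 'a::comm_ring_1) (smult c p) = smult (of_int c) (map_poly of_int p)"
  by (intro poly_eqI) (simp add: coeff_map_poly)

lemma common_denom:
  "\<exists>d (A::int poly). d > 0 \<and> map_poly of_int A = smult (of_int d) (r::rat poly)"
proof (induction r rule: pCons_induct)
  case 0
  show ?case by (intro exI[of _ 1] exI[of _ 0]) simp
next
  case (pCons a r)
  then obtain d A where dA: "d > 0" "map_poly of_int A = smult (of_int d) r" by blast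
  obtain n m where nm: "quotient_of a = (n, m)" by (cases "quotient_of a")
  have m: "m > 0" using nm quotient_of_denom_pos by blast
  have a: "a = of_int n / of_int m" using nm quotient_of_div by blast
  define A' where "A' = pCons (n * d) (smult m A)"
  have "map_poly of_int A' = smult (of_int (d * m)) (pCons a r)"
    using m dA by (simp add: A'_def map_poly_pCons map_poly_of_int_smult a mult_ac)
  thus ?case using m dA by (intro exI[of _ "d*m"] exI[of _ A']) simp
qed

lemma content_monic_int:
  fixes Q :: "int poly"
  assumes "lead_coeff Q = 1"
  shows "content Q = 1"
proof -
  have "content Q dvd 1" using content_dvd_coeff[of Q "degree Q"] assms by simp
  hence "normalize (content Q) = 1" by (simp add: is_unit_normalize del: normalize_content)
  moreover have "normalize (content Q) = content Q" by (rule normalize_content)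
  ultimately show ?thesis by simp
qed

lemma content_int_pos: "(A::int poly) \<noteq> 0 \<Longrightarrow> content A > 0"
proof -
  assume "A \<noteq> 0"
  hence "content A \<noteq> 0" by simp
  moreover have "content A \<ge> 0" using normalize_content[of A]
    by (metis abs_ge_zero normalize_int_def)
  ultimately show ?thesis by (simp add: less_le)
qed

lemma gauss_monic:
  fixes P R :: "rat poly" and Q :: "int poly"
  assumes "lead_coeff P = 1" "lead_coeff R = 1" "P * R = map_poly of_int Q"
  shows "\<exists>P'. map_poly of_int P' = P"
proof -
  obtain d A where dA: "d > 0" "map_poly of_int A = smult (of_int d) P" using common_denom by blast
  obtain e B where eB: "e > 0" "map_poly of_int B = smult (of_int e) R" using common_denom by blast
  have "map_poly (of_int :: int \<Rightarrow> rat) (A * B) = map_poly of_int (smult (d * e) Q)"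
    using dA eB assms(3) by (simp add: map_poly_of_int_mult map_poly_of_int_smult mult_ac)
  hence AB: "A * B = smult (d * e) Q" by (rule map_poly_of_int_inj)
  have lcQ: "lead_coeff Q = 1"
  proof -
    have "lead_coeff (map_poly (of_int :: int \<Rightarrow> rat) Q) = 1"
      using assms by (metis lead_coeff_mult mult_1)
    thus ?thesis by (simp add: degree_map_poly coeff_map_poly)
  qed
  have cAB: "content A * content B = d * e"
    using AB content_mult[of A B] content_monic_int[OF lcQ] dA eB
    by (simp add: normalize_int_def)
  have degA: "degree A = degree P"
    using dA by (metis degree_map_poly degree_smult_eq of_int_eq_0_iff less_irrefl of_int_eq_0_iff)
  have "of_int (coeff A (degree A)) = (of_int d :: rat)"
    using dA assms(1) degA by (metis coeff_map_poly coeff_smult mult_1_right of_int_0)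
  hence lcA: "lead_coeff A = d" by simp
  have degB: "degree B = degree R"
    using eB by (metis degree_map_poly degree_smult_eq of_int_eq_0_iff less_irrefl of_int_eq_0_iff)
  have "of_int (coeff B (degree B)) = (of_int e :: rat)"
    using eB assms(2) degB by (metis coeff_map_poly coeff_smult mult_1_right of_int_0)
  hence lcB: "lead_coeff B = e" by simp
  have Anz: "A \<noteq> 0" using lcA dA by auto
  have Bnz: "B \<noteq> 0" using lcB eB by auto
  have "content A dvd d" using content_dvd_coeff[of A "degree A"] lcA by simp
  hence cA: "content A \<le> d" using dA by (simp add: zdvd_imp_le)
  have "content B dvd e" using content_dvd_coeff[of B "degree B"] lcB by simp
  hence cB: "content B \<le> e" using eB by (simp add: zdvd_imp_le)
  have cApos: "content A > 0" "content B > 0" using content_int_pos Anz Bnz by auto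
  have cAd: "content A = d"
  proof (rule ccontr)
    assume "content A \<noteq> d"
    hence "content A < d" using cA by simp
    have "content A * content B \<le> content A * e" using cB cApos by simp
    also have "\<dots> < d * e" using \<open>content A < d\<close> eB by simp
    finally have "content A * content B < d * e" .
    thus False using cAB by simp
  qed
  define P' where "P' = map_poly (\<lambda>c. c div d) A"
  have "map_poly of_int P' = P"
  proof (rule poly_eqI)
    fix i
    have dv: "d dvd coeff A i" using content_dvd_coeff[of A i] cAd by simp
    have "of_int (coeff A i) = of_int d * coeff P i"
      using dA by (metis coeff_map_poly coeff_smult of_int_0)
    moreover have "coeff P' i = coeff A i div d" by (simp add: P'_def coeff_map_poly)
    ultimately show "coeff (map_poly of_int P') i = coeff P i"
      using dv dA by (auto simp: coeff_map_poly elim!: dvdE)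
  qed
  thus ?thesis by blast
qed

lemma gauss_content1:
  fixes A G :: "int poly" and h :: "rat poly"
  assumes "content A = 1" "map_poly of_int A * h = map_poly of_int G"
  shows "coeff h i \<in> \<int>"
proof -
  obtain d H where dH: "d > 0" "map_poly of_int H = smult (of_int d) h" using common_denom by blast
  have "map_poly (of_int :: int \<Rightarrow> rat) (A * H) = map_poly of_int (smult d G)"
    using dH assms(2) by (simp add: map_poly_of_int_mult map_poly_of_int_smult mult_ac)
  hence AH: "A * H = smult d G" by (rule map_poly_of_int_inj)
  have "content H = d * content G"
    using AH content_mult[of A H] assms(1) dH by (simp add: normalize_int_def)
  hence "d dvd coeff H i" using content_dvd_coeff[of H i] by (metis dvd_mult_left dvd_trans)
  then obtain k where k: "coeff H i = d * k" by (elim dvdE)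
  have "of_int (coeff H i) = of_int d * coeff h i"
    using dH by (metis coeff_map_poly coeff_smult of_int_0)
  hence "coeff h i = of_int k" using k dH by simp
  thus ?thesis by simp
qed

theorem lemma4p9:
  fixes \<nu> :: int and p :: nat
  assumes "\<nu> \<ge> 3" and "squarefree \<nu>" and "\<nu> mod 4 = 2 \<or> \<nu> mod 4 = 3"
    and "prime p"
    and "\<exists>n\<ge>1. int_dvd_rat (int p) (Cterm \<nu> n)"
  shows "ideal_px (int p) (xseq \<nu> (LEAST n. n \<ge> 1 \<and> int_dvd_rat (int p) (Cterm \<nu> n)))
           \<noteq> Zadj (xseq \<nu> (LEAST n. n \<ge> 1 \<and> int_dvd_rat (int p) (Cterm \<nu> n)))"
proof -
  define N where "N = (LEAST n. n \<ge> 1 \<and> int_dvd_rat (int p) (Cterm \<nu> n))"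
  have nu0: "\<nu> \<ge> 0" using assms(1) by simp
  have "N \<ge> 1 \<and> int_dvd_rat (int p) (Cterm \<nu> N)"
    unfolding N_def using assms(5) by (rule LeastI_ex)
  then obtain k where k: "Cterm \<nu> N = of_int (int p * k)" by (auto simp: int_dvd_rat_def)
  define x where "x = xseq \<nu> N"
  define P where "P = min_poly x"
  have minP: "is_min_poly x P" unfolding P_def x_def by (rule min_poly_is[OF nu0])
  obtain Q :: "int poly" where Q: "lead_coeff Q = 1" "poly (map_poly of_int Q) x = 0"
    using xseq_algebraic_int[OF nu0] unfolding x_def by blast
  have "P dvd map_poly of_int Q"
    using minP Q by (intro min_poly_dvd) (auto simp: map_poly_of_rat_of_int)
  then obtain R where PR: "map_poly of_int Q = P * R" by (elim dvdE)
  have lcQ: "lead_coeff (map_poly (of_int :: int \<Rightarrow> rat) Q) = 1"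
    using Q by (simp add: degree_map_poly coeff_map_poly)
  have lcP: "lead_coeff P = 1" using minP by (simp add: is_min_poly_def)
  hence lcR: "lead_coeff R = 1" using lcQ PR by (simp add: lead_coeff_mult)
  obtain P' where P': "map_poly of_int P' = P"
    using gauss_monic[OF lcP lcR PR[symmetric]] by blast
  have "lead_coeff (map_poly (of_int :: int \<Rightarrow> rat) P') = of_int (lead_coeff P')"
    by (simp add: degree_map_poly coeff_map_poly)
  hence "lead_coeff P' = 1" using lcP P' by simp
  hence cP': "content P' = 1" by (rule content_monic_int)
  have one: "1 \<in> Zadj x"
    unfolding Zadj_def by (intro CollectI exI[of _ 1]) simp
  have "1 \<notin> ideal_px (int p) x"
  proof
    assume "1 \<in> ideal_px (int p) x"
    then obtain fa fb :: "int poly" where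
      eq1: "1 = of_int (int p) * poly (map_poly of_int fa) x + x * poly (map_poly of_int fb) x"
      unfolding ideal_px_def Zadj_def by blast
    define g where "g = smult (int p) fa + [:0, 1:] * fb - 1"
    have mX: "map_poly (of_int :: int \<Rightarrow> 'a::comm_ring_1) [:0, 1:] = [:0, 1:]"
      by (simp add: map_poly_pCons)
    have mg: "map_poly (of_int :: int \<Rightarrow> real) g =
        smult (of_int (int p)) (map_poly of_int fa) + [:0, 1:] * map_poly of_int fb - 1"
      unfolding g_def by (simp only: map_poly_of_int_add map_poly_of_int_diff map_poly_of_int_mult
          map_poly_of_int_smult mX map_poly_1' of_int_1)
    have "poly (map_poly of_int g) x = 0"
    proof -
      have px: "poly [:0, 1:] x = x" by simp
      show ?thesis unfolding mg poly_diff poly_add poly_mult poly_smult px poly_1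
        using eq1 by linarith
    qed
    hence "P dvd map_poly of_int g"
      using minP by (intro min_poly_dvd) (auto simp: map_poly_of_rat_of_int)
    then obtain h where gh: "map_poly of_int g = P * h" by (elim dvdE)
    have "coeff h 0 \<in> \<int>"
      using gauss_content1[OF cP', of h g] gh P' by simp
    then obtain t where t: "coeff h 0 = of_int t" by (elim Ints_cases)
    have "of_int (coeff g 0) = coeff P 0 * coeff h 0"
      using gh by (metis coeff_map_poly coeff_mult_0 of_int_0)
    also have "coeff P 0 = of_int (int p * k)"
      using k by (simp add: Cterm_def P_def x_def)
    finally have "of_int (coeff g 0) = (of_int (int p * k * t) :: rat)" using t by simp
    hence "coeff g 0 = int p * k * t" by (simp only: of_int_eq_iff)
    hence "int p * coeff fa 0 - 1 = int p * k * t" by (simp add: g_def)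
    hence "1 = int p * (coeff fa 0 - k * t)" by (simp add: algebra_simps)
    hence "int p dvd 1" by (rule dvdI)
    thus False using assms(4) by (simp add: prime_gt_1_nat)
  qed
  hence "ideal_px (int p) x \<noteq> Zadj x" using one by blast
  thus ?thesis unfolding x_def N_def .
qed

end
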